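(* Let $\mathcal{X}$ be a state space and let $C:\mathcal{X}\to U$ be the ground-truth meta-state mapping of a Meta-Causal Graph $\{\mathcal{G}_u\}_{u\in U}$ on variables $X=\{X_i\}_{i\in[p]}$, whose causal skeleton matrices satisfy $M_u\neq M_{u'}$ for all $u\neq u'$. Assume the Mixed Data Structure Learning assumption stated in the context. If the learned mapping $\hat C:\mathcal{X}\to\hat U$ satisfies $|\hat U|>|U|$, then $\hat C$ is observationally equivalent to $C$: there exists a mapping $\phi:\hat U\to U$ with $C(x)=\phi(\hat C(x))$ for all $x\in\mathcal{X}$.
   Context: A Meta-Causal Graph consists of a finite set $U$ of meta states, for each $u\in U$ a DAG $\mathcal{G}_u$ on vertex set $[p]$ with causal skeleton matrix $M_u\in\{0,1\}^{p\times p}$ ($M_u[i,j]=1$ iff $i$ is a parent of $j$ in $\mathcal{G}_u$), and a ground-truth mapping $C:\mathcal{X}\to U$; skeleton matrices of distinct meta states are distinct. Each sample $x$ is generated from $\mathcal{G}_{C(x)}$. Mixed Data Structure Learning assumption: for any dataset $\mathcal{D}$ whose samples come from the subgraphs indexed by $S_{\mathcal{D}}\subseteq U$, learning a single causal graph $\hat{\mathcal{G}}$ from $\mathcal{D}$ yields $\mathrm{Pa}_{\hat{\mathcal{G}}}(X_j)=\bigcup_{u\in S_{\mathcal{D}}}\mathrm{Pa}_{\mathcal{G}_u}(X_j)$ for all $j\in[p]$ (learned skeleton = entrywise OR of the contributing $M_u$). Learned mapping: for a candidate $\hat C:\mathcal{X}\to\hat U$, for each $\hat u$ a skeleton $\hat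 M_{\hat u}$ is learned from the pooled samples $\{x:\hat C(x)=\hat u\}$, and the learned mapping is one selected by the learning procedure as minimizing the expected structural complexity $\mathbb{E}_x\big[\|\hat M_{\hat C(x)}\|_1\big]$ over such mappings. Two mappings $C_1:\mathcal{X}\to U_1$, $C_2:\mathcal{X}\to U_2$ are observationally equivalent if there is a map $\phi:U_1\to U_2$ with $C_2(x)=\phi(C_1(x))$ for all $x$. *)

theory Defs
  imports Complex_Main "HOL-Library.FuncSet"
begin

text \<open>A causal skeleton matrix on vertex set [p] = {0..<p}:
  M i j = True iff i is a parent of j. Entries outside [p] are required to be False.\<close>
type_synonym skeleton = "nat \<Rightarrow> nat \<Rightarrow> bool"

definition well_formed_skel :: "nat \<Rightarrow> skeleton \<Rightarrow> bool" where
  "well_formed_skel p M \<longleftrightarrow> (\<forall>i j. M i j \<longrightarrow> i < p \<and> j < p)"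

definition is_dag :: "nat \<Rightarrow> skeleton \<Rightarrow> bool" where
  "is_dag p M \<longleftrightarrow> acyclic {(i, j). i < p \<and> j < p \<and> M i j}"

definition skel_norm :: "nat \<Rightarrow> skeleton \<Rightarrow> nat" where
  "skel_norm p M = card {(i, j). i < p \<and> j < p \<and> M i j}"

definition meta_causal_graph ::
  "nat \<Rightarrow> 'u set \<Rightarrow> ('u \<Rightarrow> skeleton) \<Rightarrow> 'x set \<Rightarrow> ('x \<Rightarrow> 'u) \<Rightarrow> bool" where
  "meta_causal_graph p U M Xs C \<longleftrightarrow>
     finite U \<and>
     (\<forall>u\<in>U. well_formed_skel p (M u) \<and> is_dag p (M u)) \<and>
     (\<forall>u\<in>U. \<forall>u'\<in>U. u \<noteq> u' \<longrightarrow> M u \<noteq> M u') \<and>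
     (\<forall>x\<in>Xs. C x \<in> U)"

definition mixed_data_structure_learning ::
  "nat \<Rightarrow> ('u \<Rightarrow> skeleton) \<Rightarrow> 'x set \<Rightarrow> ('x \<Rightarrow> 'u) \<Rightarrow> ('x set \<Rightarrow> skeleton) \<Rightarrow> bool" where
  "mixed_data_structure_learning p M Xs C learn \<longleftrightarrow>
     (\<forall>D. D \<subseteq> Xs \<and> D \<noteq> {} \<longrightarrow>
        (\<forall>i<p. \<forall>j<p. learn D i j \<longleftrightarrow> (\<exists>u\<in>C ` D. M u i j)))"

definition learned_skel ::
  "('x set \<Rightarrow> skeleton) \<Rightarrow> 'x set \<Rightarrow> ('x \<Rightarrow> 'v) \<Rightarrow> 'v \<Rightarrow> skeleton" where
  "learned_skel learn Xs Ch v = learn {y \<in> Xs. Ch y = v}"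

definition expected_complexity ::
  "nat \<Rightarrow> ('x set \<Rightarrow> skeleton) \<Rightarrow> 'x set \<Rightarrow> ('x \<Rightarrow> real) \<Rightarrow> ('x \<Rightarrow> 'v) \<Rightarrow> real" where
  "expected_complexity p learn Xs w Ch =
     (\<Sum>x\<in>Xs. w x * real (skel_norm p (learned_skel learn Xs Ch (Ch x))))"

definition learned_mapping ::
  "nat \<Rightarrow> ('x set \<Rightarrow> skeleton) \<Rightarrow> 'x set \<Rightarrow> ('x \<Rightarrow> real) \<Rightarrow> 'v set \<Rightarrow> ('x \<Rightarrow> 'v) \<Rightarrow> bool" where
  "learned_mapping p learn Xs w Vh Ch \<longleftrightarrow>
     Ch \<in> Xs \<rightarrow> Vh \<and>
     (\<forall>Ch'. Ch' \<in> Xs \<rightarrow> Vh \<longrightarrow>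
        expected_complexity p learn Xs w Ch \<le> expected_complexity p learn Xs w Ch')"

definition obs_equiv ::
  "'x set \<Rightarrow> 'a set \<Rightarrow> ('x \<Rightarrow> 'a) \<Rightarrow> 'b set \<Rightarrow> ('x \<Rightarrow> 'b) \<Rightarrow> bool" where
  "obs_equiv Xs U1 C1 U2 C2 \<longleftrightarrow> (\<exists>\<phi>. \<phi> \<in> U1 \<rightarrow> U2 \<and> (\<forall>x\<in>Xs. C2 x = \<phi> (C1 x)))"

end

theory Submission
  imports Defs
begin

definition Aset :: "nat \<Rightarrow> skeleton \<Rightarrow> (nat \<times> nat) set" where
  "Aset p M = {(i, j). i < p \<and> j < p \<and> M i j}"

lemma Aset_fin: "finite (Aset p M)"
proof -
  have "Aset p M \<subseteq> {..<p} \<times> {..<p}" by (auto simp: Aset_def)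
  then show ?thesis by (rule finite_subset) auto
qed

lemma norm_Aset: "skel_norm p M = card (Aset p M)"
  by (simp add: skel_norm_def Aset_def)

lemma learned_Aset:
  assumes mdl: "mixed_data_structure_learning p M Xs C learn"
    and x: "x \<in> Xs"
  shows "Aset p (learned_skel learn Xs Ch (Ch x)) =
     {(i, j). i < p \<and> j < p \<and> (\<exists>y\<in>Xs. Ch y = Ch x \<and> M (C y) i j)}"
proof -
  have D: "{y \<in> Xs. Ch y = Ch x} \<subseteq> Xs" "{y \<in> Xs. Ch y = Ch x} \<noteq> {}" using x by auto
  have "\<forall>i<p. \<forall>j<p. learn {y \<in> Xs. Ch y = Ch x} i j \<longleftrightarrow> (\<exists>u\<in>C ` {y \<in> Xs. Ch y = Ch x}. M u i j)"
    using mdl D unfolding mixed_data_structure_learning_def by blast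
  then show ?thesis unfolding Aset_def learned_skel_def by auto
qed

lemma sub_learned:
  assumes mdl: "mixed_data_structure_learning p M Xs C learn"
    and x: "x \<in> Xs"
  shows "Aset p (M (C x)) \<subseteq> Aset p (learned_skel learn Xs Ch (Ch x))"
  using learned_Aset[OF mdl x, of Ch] x by (auto simp: Aset_def)

lemma lower:
  assumes mdl: "mixed_data_structure_learning p M Xs C learn"
    and x: "x \<in> Xs"
  shows "card (Aset p (M (C x))) \<le> skel_norm p (learned_skel learn Xs Ch (Ch x))"
  unfolding norm_Aset by (rule card_mono[OF Aset_fin sub_learned[OF mdl x]])

theorem theorem2:
  fixes p :: nat and U :: "'u set" and M :: "'u \<Rightarrow> skeleton"
    and Xs :: "'x set" and C :: "'x \<Rightarrow> 'u" and w :: "'x \<Rightarrow> real"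
    and learn :: "'x set \<Rightarrow> skeleton"
    and Uh :: "'v set" and Ch :: "'x \<Rightarrow> 'v"
  assumes "meta_causal_graph p U M Xs C"
    and "U \<noteq> {}"
    and "finite Xs"
    and "\<forall>x\<in>Xs. w x > 0"
    and "(\<Sum>x\<in>Xs. w x) = 1"
    and "mixed_data_structure_learning p M Xs C learn"
    and "finite Uh"
    and "learned_mapping p learn Xs w Uh Ch"
    and "card Uh > card U"
  shows "obs_equiv Xs Uh Ch U C"
proof -
  note mcg = assms(1)[unfolded meta_causal_graph_def]
  note mdl = assms(6)
  have finU: "finite U" using mcg by blast
  have CU: "\<forall>x\<in>Xs. C x \<in> U" using mcg by blast
  have wf: "\<forall>u\<in>U. well_formed_skel p (M u)" using mcg by blast
  have dist: "\<forall>u\<in>U. \<forall>u'\<in>U. u \<noteq> u' \<longrightarrow> M u \<noteq> M u'" using mcg by blast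
  define LB where "LB = (\<Sum>x\<in>Xs. w x * real (card (Aset p (M (C x)))))"
  have lb: "LB \<le> expected_complexity p learn Xs w Ch'" for Ch' :: "'x \<Rightarrow> 'v"
    unfolding LB_def expected_complexity_def
    apply (rule sum_mono)
    using lower[OF mdl, of _ Ch'] assms(4) by (simp add: less_imp_le)
  obtain g where g: "inj_on g U" "g ` U \<subseteq> Uh"
    using card_le_inj[OF finU assms(7)] assms(9) by auto
  define Ch0 where "Ch0 = (\<lambda>x. g (C x))"
  have Ch0Pi: "Ch0 \<in> Xs \<rightarrow> Uh" using g CU by (auto simp: Ch0_def)
  have eq0: "Aset p (learned_skel learn Xs Ch0 (Ch0 x)) = Aset p (M (C x))" if x: "x \<in> Xs" for x
  proof -
    have "\<And>y. y \<in> Xs \<Longrightarrow> Ch0 y = Ch0 x \<longleftrightarrow> C y = C x"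
      using g(1) CU x unfolding Ch0_def inj_on_def by metis
    then show ?thesis using learned_Aset[OF mdl x, of Ch0] x by (auto simp: Aset_def)
  qed
  have "expected_complexity p learn Xs w Ch0 = LB"
    unfolding LB_def expected_complexity_def
    by (rule sum.cong) (auto simp: norm_Aset eq0)
  then have "expected_complexity p learn Xs w Ch \<le> LB"
    using assms(8) Ch0Pi unfolding learned_mapping_def by metis
  then have eqsum: "expected_complexity p learn Xs w Ch = LB" using lb[of Ch] by linarith
  have ChPi: "Ch \<in> Xs \<rightarrow> Uh" using assms(8) unfolding learned_mapping_def by blast
  have tight: "card (Aset p (M (C x))) = skel_norm p (learned_skel learn Xs Ch (Ch x))"
    if x: "x \<in> Xs" for x
  proof (rule ccontr)
    assume ne: "card (Aset p (M (C x))) \<noteq> skel_norm p (learned_skel learn Xs Ch (Ch x))"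
    have "LB < expected_complexity p learn Xs w Ch"
      unfolding LB_def expected_complexity_def
    proof (rule sum_strict_mono_ex1[OF assms(3)])
      show "\<forall>y\<in>Xs. w y * real (card (Aset p (M (C y)))) \<le> w y * real (skel_norm p (learned_skel learn Xs Ch (Ch y)))"
        using lower[OF mdl, of _ Ch] assms(4) by (simp add: less_imp_le)
      have "card (Aset p (M (C x))) < skel_norm p (learned_skel learn Xs Ch (Ch x))"
        using lower[OF mdl x, of Ch] ne by linarith
      then show "\<exists>y\<in>Xs. w y * real (card (Aset p (M (C y)))) < w y * real (skel_norm p (learned_skel learn Xs Ch (Ch y)))"
        using x assms(4) by (intro bexI[of _ x]) auto
    qed
    then show False using eqsum by simp
  qed
  have seteq: "Aset p (M (C x)) = Aset p (learned_skel learn Xs Ch (Ch x))" if x: "x \<in> Xs" for x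
    using card_subset_eq[OF Aset_fin sub_learned[OF mdl x, of Ch]] tight[OF x]
    by (simp add: norm_Aset)
  have pure: "C x = C y" if "x \<in> Xs" "y \<in> Xs" "Ch x = Ch y" for x y
  proof -
    have A: "Aset p (M (C x)) = Aset p (M (C y))" using seteq that by metis
    have "M (C x) = M (C y)"
    proof (intro ext)
      fix i j
      show "M (C x) i j = M (C y) i j"
        using A wf CU that unfolding Aset_def well_formed_skel_def
        by (smt (verit, best) case_prodI mem_Collect_eq old.prod.case)
    qed
    then show ?thesis using dist CU that by blast
  qed
  obtain u0 where u0: "u0 \<in> U" using assms(2) by blast
  define phi where "phi = (\<lambda>v. if \<exists>x\<in>Xs. Ch x = v then C (SOME x. x \<in> Xs \<and> Ch x = v) else u0)"
  have "phi \<in> Uh \<rightarrow> U"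
  proof
    fix v assume "v \<in> Uh"
    show "phi v \<in> U"
    proof (cases "\<exists>x\<in>Xs. Ch x = v")
      case True
      then have "(SOME x. x \<in> Xs \<and> Ch x = v) \<in> Xs" by (metis (mono_tags, lifting) someI)
      then show ?thesis using True CU by (simp add: phi_def)
    qed (simp add: phi_def u0)
  qed
  moreover have "\<forall>x\<in>Xs. C x = phi (Ch x)"
  proof
    fix x assume x: "x \<in> Xs"
    let ?y = "SOME y. y \<in> Xs \<and> Ch y = Ch x"
    have "?y \<in> Xs \<and> Ch ?y = Ch x" using x by (metis (mono_tags, lifting) someI)
    then show "C x = phi (Ch x)" using pure[of x ?y] x by (auto simp: phi_def)
  qed
  ultimately show ?thesis unfolding obs_equiv_def by blast
qed

end
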